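(* Let $M\subset\mathbb{R}^2$ be open with coordinates $(x,u)$, let $M^{(1)}$ be the first-order jet space with coordinates $(x,u,u_x)$, and consider the ODE $u_{xx}=\phi(x,u,u_x)$ with associated vector field $\mathbf{A}=\partial_x+u_x\partial_u+\phi\,\partial_{u_x}$. Let $(\partial_u,\lambda_1)$ and $(\partial_u,\lambda_2)$ be the canonical representatives of two non-equivalent generalized $\mathcal{C}^\infty$-symmetries of this ODE (so $\lambda_1\neq\lambda_2$), put $\mathbf{X}_i=\partial_u+\lambda_i\partial_{u_x}$ ($i=1,2$) and $$\rho=\frac{\mathbf{X}_1(\lambda_2)-\mathbf{X}_2(\lambda_1)}{\lambda_1-\lambda_2}.$$ If $f_1=f_1(x,u,u_x)$ and $f_2=f_2(x,u,u_x)$ are functions such that $$\frac{\mathbf{X}_1(f_2)}{f_2}=\frac{\mathbf{X}_2(f_1)}{f_1}=\rho,$$ then $$[f_1\mathbf{X}_1,\mathbf{A}]=\rho_1 (f_1\mathbf{X}_1),\qquad [f_2\mathbf{X}_2,\mathbf{A}]=\rho_2 (f_2\mathbf{X}_2),\qquad [f_1\mathbf{X}_1,f_2\mathbf{X}_2]=0,$$ where $\rho_i=\lambda_i-\mathbf{A}(f_i)/f_i$ for $i=1,2$.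
   Context: All functions are smooth on $M^{(1)}$ and all statements are local, on an open set where the functions appearing in denominators ($\lambda_1-\lambda_2$, $f_1$, $f_2$) do not vanish. For smooth $\xi,\eta,\lambda$ on $M^{(1)}$ and $\mathbf{v}=\xi\partial_x+\eta\partial_u$, the $\lambda$-prolongation is $\mathbf{v}^{[\lambda,(1)]}=\mathbf{v}+\big((\mathbf{A}+\lambda)(\eta)-(\mathbf{A}+\lambda)(\xi)u_x\big)\partial_{u_x}$. The pair $(\mathbf{v},\lambda)$ is a generalized $\mathcal{C}^\infty$-symmetry (generalized $\lambda$-symmetry) of the ODE if $[\mathbf{v}^{[\lambda,(1)]},\mathbf{A}]=\lambda\,\mathbf{v}^{[\lambda,(1)]}+\mu\mathbf{A}$ with $\mu=-(\mathbf{A}+\lambda)(\xi)$. Two generalized $\mathcal{C}^\infty$-symmetries $(\mathbf{v}_1,\lambda_1)$, $(\mathbf{v}_2,\lambda_2)$ are $\mathbf{A}$-equivalent if $\{\mathbf{A},\mathbf{v}_1^{[\lambda_1,(1)]},\mathbf{v}_2^{[\lambda_2,(1)]}\}$ is linearly dependent over $C^\infty(M^{(1)})$. If $Q=\eta-\xi u_x$ is the characteristic of $\mathbf{v}$, the canonical representative of the equivalence class of $(\mathbf{v},\lambda)$ is the pair $(\partial_u,\lambda+\mathbf{A}(Q)/Q)$; in particular $(\partial_u,\lambda)$ is a generalized $\mathcal{C}^\infty$-symmetry iff $[\partial_u+\lambda\partial_{u_x},\mathbf{A}]=\lambda(\partial_u+\lambda\partial_{u_x})$. *)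

theory Defs
  imports "HOL-Analysis.Analysis"
begin

text \<open>Points of the jet space M^(1) are triples (x, u, u_x).
  Vector fields are triples of component functions w.r.t. the coordinate
  fields d/dx, d/du, d/du_x.\<close>

type_synonym pt = "real \<times> real \<times> real"
type_synonym fn = "pt \<Rightarrow> real"
type_synonym vf = "fn \<times> fn \<times> fn"

text \<open>Partial derivative in the i-th coordinate (0: x, 1: u, 2: u_x).\<close>
definition pd :: "nat \<Rightarrow> fn \<Rightarrow> fn" where
  "pd i f = (\<lambda>(x, u, ux).
     if i = 0 then deriv (\<lambda>t. f (t, u, ux)) x
     else if i = 1 then deriv (\<lambda>t. f (x, t, ux)) u
     else deriv (\<lambda>t. f (x, u, t)) ux)"

fun iterpd :: "nat list \<Rightarrow> fn \<Rightarrow> fn" where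
  "iterpd [] f = f"
| "iterpd (i # ds) f = pd i (iterpd ds f)"

definition smooth_on :: "pt set \<Rightarrow> fn \<Rightarrow> bool" where
  "smooth_on U f \<longleftrightarrow> (\<forall>ds. iterpd ds f differentiable_on U)"

definition vapp :: "vf \<Rightarrow> fn \<Rightarrow> fn" where
  "vapp V f = (case V of (a, b, c) \<Rightarrow>
     (\<lambda>p. a p * pd 0 f p + b p * pd 1 f p + c p * pd 2 f p))"

definition lie :: "vf \<Rightarrow> vf \<Rightarrow> vf" where
  "lie V W = (case V of (a, b, c) \<Rightarrow> case W of (a', b', c') \<Rightarrow>
     (\<lambda>p. vapp V a' p - vapp W a p,
      \<lambda>p. vapp V b' p - vapp W b p,
      \<lambda>p. vapp V c' p - vapp W c p))"

definition fscale :: "fn \<Rightarrow> vf \<Rightarrow> vf" where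
  "fscale g V = (case V of (a, b, c) \<Rightarrow>
     (\<lambda>p. g p * a p, \<lambda>p. g p * b p, \<lambda>p. g p * c p))"

definition vadd :: "vf \<Rightarrow> vf \<Rightarrow> vf" where
  "vadd V W = (case V of (a, b, c) \<Rightarrow> case W of (a', b', c') \<Rightarrow>
     (\<lambda>p. a p + a' p, \<lambda>p. b p + b' p, \<lambda>p. c p + c' p))"

definition vf_eq_on :: "pt set \<Rightarrow> vf \<Rightarrow> vf \<Rightarrow> bool" where
  "vf_eq_on U V W \<longleftrightarrow> (\<forall>p\<in>U. fst V p = fst W p \<and> fst (snd V) p = fst (snd W) p
                                \<and> snd (snd V) p = snd (snd W) p)"

definition Afield :: "fn \<Rightarrow> vf" where
  "Afield phi = (\<lambda>_. 1, \<lambda>(x, u, ux). ux, phi)"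

definition Xfield :: "fn \<Rightarrow> vf" where
  "Xfield lam = (\<lambda>_. 0, \<lambda>_. 1, lam)"

definition Aplus :: "fn \<Rightarrow> fn \<Rightarrow> fn \<Rightarrow> fn" where
  "Aplus phi lam f = (\<lambda>p. vapp (Afield phi) f p + lam p * f p)"

definition lam_prolong :: "fn \<Rightarrow> fn \<Rightarrow> fn \<Rightarrow> fn \<Rightarrow> vf" where
  "lam_prolong phi xi eta lam =
     (xi, eta, \<lambda>(x, u, ux). Aplus phi lam eta (x, u, ux) - Aplus phi lam xi (x, u, ux) * ux)"

definition gen_Cinf_sym :: "pt set \<Rightarrow> fn \<Rightarrow> fn \<Rightarrow> fn \<Rightarrow> fn \<Rightarrow> bool" where
  "gen_Cinf_sym U phi xi eta lam \<longleftrightarrow>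
     vf_eq_on U (lie (lam_prolong phi xi eta lam) (Afield phi))
       (vadd (fscale lam (lam_prolong phi xi eta lam))
             (fscale (\<lambda>p. - Aplus phi lam xi p) (Afield phi)))"

definition A_equiv :: "pt set \<Rightarrow> fn \<Rightarrow> fn \<Rightarrow> fn \<Rightarrow> fn \<Rightarrow> fn \<Rightarrow> fn \<Rightarrow> fn \<Rightarrow> bool" where
  "A_equiv U phi xi1 eta1 lam1 xi2 eta2 lam2 \<longleftrightarrow>
     (\<exists>a b c. smooth_on U a \<and> smooth_on U b \<and> smooth_on U c \<and>
        (\<exists>p\<in>U. a p \<noteq> 0 \<or> b p \<noteq> 0 \<or> c p \<noteq> 0) \<and>
        vf_eq_on U (vadd (fscale a (Afield phi))
                     (vadd (fscale b (lam_prolong phi xi1 eta1 lam1))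
                           (fscale c (lam_prolong phi xi2 eta2 lam2))))
                   (\<lambda>_. 0, \<lambda>_. 0, \<lambda>_. 0))"

end

theory Submission
  imports Defs
begin
lemma fd_of: assumes "(f::pt\<Rightarrow>real) differentiable (at p)"
  shows "(\<lambda>t. f (t, fst (snd p), snd (snd p))) field_differentiable at (fst p)"
    "(\<lambda>t. f (fst p, t, snd (snd p))) field_differentiable at (fst (snd p))"
    "(\<lambda>t. f (fst p, fst (snd p), t)) field_differentiable at (snd (snd p))"
proof -
  have "(\<lambda>t. f (t, fst (snd p), snd (snd p))) differentiable at (fst p)"
    by (rule differentiable_compose[where f=f]) (use assms in \<open>auto intro!: derivative_intros\<close>)
  then show "(\<lambda>t. f (t, fst (snd p), snd (snd p))) field_differentiable at (fst p)"
    by (simp add: real_differentiable_def field_differentiable_def)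
  have "(\<lambda>t. f (fst p, t, snd (snd p))) differentiable at (fst (snd p))"
    by (rule differentiable_compose[where f=f]) (use assms in \<open>auto intro!: derivative_intros\<close>)
  then show "(\<lambda>t. f (fst p, t, snd (snd p))) field_differentiable at (fst (snd p))"
    by (simp add: real_differentiable_def field_differentiable_def)
  have "(\<lambda>t. f (fst p, fst (snd p), t)) differentiable at (snd (snd p))"
    by (rule differentiable_compose[where f=f]) (use assms in \<open>auto intro!: derivative_intros\<close>)
  then show "(\<lambda>t. f (fst p, fst (snd p), t)) field_differentiable at (snd (snd p))"
    by (simp add: real_differentiable_def field_differentiable_def)
qed

lemma pd_mult: assumes "f differentiable (at p)" "g differentiable (at p)"
  shows "pd i (\<lambda>q. f q * g q) p = f p * pd i g p + pd i f p * g p"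
proof -
  obtain x u ux where p: "p = (x,u,ux)" by (cases p) auto
  show ?thesis using fd_of[OF assms(1)] fd_of[OF assms(2)]
    by (simp add: pd_def p)
qed

lemma pd_const: "pd i (\<lambda>q. c) p = 0"
  by (cases p) (simp add: pd_def)

lemma pd_ux: "pd 0 (\<lambda>(x,u,ux). ux) p = 0" "pd (Suc 0) (\<lambda>(x,u,ux). ux) p = 0" "pd 2 (\<lambda>(x,u,ux). ux) p = 1"
  by (cases p, simp add: pd_def)+

lemma smooth_diff: "smooth_on U f \<Longrightarrow> open U \<Longrightarrow> p \<in> U \<Longrightarrow> f differentiable (at p)"
  unfolding smooth_on_def
  by (metis iterpd.simps(1) differentiable_on_def at_within_open)

lemma lp: "lam_prolong phi (\<lambda>_. 0) (\<lambda>_. 1) lam = Xfield lam"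
  by (auto simp: lam_prolong_def Xfield_def Aplus_def vapp_def Afield_def pd_const)

lemma symeq: assumes "gen_Cinf_sym U phi (\<lambda>_. 0) (\<lambda>_. 1) lam" "p \<in> U"
  shows "vapp (Xfield lam) phi p - vapp (Afield phi) lam p = lam p * lam p"
  using assms unfolding gen_Cinf_sym_def lp vf_eq_on_def
  by (auto simp: lie_def vadd_def fscale_def Xfield_def Afield_def Aplus_def vapp_def pd_const)
lemma g1lem:
  assumes "open U" "smooth_on U lam1" "smooth_on U f1"
    "gen_Cinf_sym U phi (\<lambda>_. 0) (\<lambda>_. 1) lam1" "\<forall>p\<in>U. f1 p \<noteq> 0"
    "rho1 = (\<lambda>p. lam1 p - vapp (Afield phi) f1 p / f1 p)"
  shows "vf_eq_on U (lie (fscale f1 (Xfield lam1)) (Afield phi)) (fscale rho1 (fscale f1 (Xfield lam1)))"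
    unfolding vf_eq_on_def
  proof
    note d = smooth_diff[OF _ assms(1)]
    fix p assume p: "p \<in> U"
    have s: "vapp (Xfield lam1) phi p - vapp (Afield phi) lam1 p = lam1 p * lam1 p"
      using symeq[OF assms(4) p] .
    have s2: "pd (Suc 0) phi p = lam1 p * lam1 p + vapp (Afield phi) lam1 p - lam1 p * pd 2 phi p"
      using s by (simp add: vapp_def Xfield_def algebra_simps)
    have nz: "f1 p \<noteq> 0" using assms(5) p by auto
    show "fst (lie (fscale f1 (Xfield lam1)) (Afield phi)) p = fst (fscale rho1 (fscale f1 (Xfield lam1))) p \<and>
      fst (snd (lie (fscale f1 (Xfield lam1)) (Afield phi))) p = fst (snd (fscale rho1 (fscale f1 (Xfield lam1)))) p \<and>
      snd (snd (lie (fscale f1 (Xfield lam1)) (Afield phi))) p = snd (snd (fscale rho1 (fscale f1 (Xfield lam1)))) p"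
      using nz d[OF assms(3) p] d[OF assms(2) p]
      apply (simp add: s2 lie_def fscale_def Xfield_def pd_const pd_ux pd_mult assms(6))
      apply (simp add: vapp_def Afield_def pd_const pd_ux pd_mult s2 case_prod_beta field_simps)
      done
  qed

theorem lemma1:
  fixes U :: "pt set" and phi lam1 lam2 f1 f2 :: fn
  assumes "open U"
    and "smooth_on U phi" and "smooth_on U lam1" and "smooth_on U lam2"
    and "smooth_on U f1" and "smooth_on U f2"
    and "gen_Cinf_sym U phi (\<lambda>_. 0) (\<lambda>_. 1) lam1"
    and "gen_Cinf_sym U phi (\<lambda>_. 0) (\<lambda>_. 1) lam2"
    and "\<not> A_equiv U phi (\<lambda>_. 0) (\<lambda>_. 1) lam1 (\<lambda>_. 0) (\<lambda>_. 1) lam2"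
    and "\<forall>p\<in>U. lam1 p \<noteq> lam2 p"
    and "\<forall>p\<in>U. f1 p \<noteq> 0" and "\<forall>p\<in>U. f2 p \<noteq> 0"
    and "rho = (\<lambda>p. (vapp (Xfield lam1) lam2 p - vapp (Xfield lam2) lam1 p) / (lam1 p - lam2 p))"
    and "\<forall>p\<in>U. vapp (Xfield lam1) f2 p / f2 p = rho p"
    and "\<forall>p\<in>U. vapp (Xfield lam2) f1 p / f1 p = rho p"
    and "rho1 = (\<lambda>p. lam1 p - vapp (Afield phi) f1 p / f1 p)"
    and "rho2 = (\<lambda>p. lam2 p - vapp (Afield phi) f2 p / f2 p)"
  shows "vf_eq_on U (lie (fscale f1 (Xfield lam1)) (Afield phi)) (fscale rho1 (fscale f1 (Xfield lam1)))
       \<and> vf_eq_on U (lie (fscale f2 (Xfield lam2)) (Afield phi)) (fscale rho2 (fscale f2 (Xfield lam2)))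
       \<and> vf_eq_on U (lie (fscale f1 (Xfield lam1)) (fscale f2 (Xfield lam2))) (\<lambda>_. 0, \<lambda>_. 0, \<lambda>_. 0)"
proof -
  note d = smooth_diff[OF _ assms(1)]
  have g3: "vf_eq_on U (lie (fscale f1 (Xfield lam1)) (fscale f2 (Xfield lam2))) (\<lambda>_. 0, \<lambda>_. 0, \<lambda>_. 0)"
    unfolding vf_eq_on_def
  proof
    fix p assume p: "p \<in> U"
    have nz1: "f1 p \<noteq> 0" using assms(11) p by auto
    have nz2: "f2 p \<noteq> 0" using assms(12) p by auto
    have nl: "lam1 p - lam2 p \<noteq> 0" using assms(10) p by auto
    have h1: "pd (Suc 0) f2 p = rho p * f2 p - lam1 p * pd 2 f2 p"
      using bspec[OF assms(14) p] nz2 by (simp add: vapp_def Xfield_def field_simps)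
    have h2: "pd (Suc 0) f1 p = rho p * f1 p - lam2 p * pd 2 f1 p"
      using bspec[OF assms(15) p] nz1 by (simp add: vapp_def Xfield_def field_simps)
    have h3: "pd (Suc 0) lam2 p = rho p * (lam1 p - lam2 p) + pd (Suc 0) lam1 p + lam2 p * pd 2 lam1 p - lam1 p * pd 2 lam2 p"
      using nl by (simp add: assms(13) vapp_def Xfield_def field_simps)
    show "fst (lie (fscale f1 (Xfield lam1)) (fscale f2 (Xfield lam2))) p = fst (\<lambda>_. 0, \<lambda>_. 0, \<lambda>_. 0::real) p \<and>
      fst (snd (lie (fscale f1 (Xfield lam1)) (fscale f2 (Xfield lam2)))) p = fst (snd (\<lambda>_. 0, \<lambda>_. 0, \<lambda>_. 0::real)) p \<and>
      snd (snd (lie (fscale f1 (Xfield lam1)) (fscale f2 (Xfield lam2)))) p = snd (snd (\<lambda>_. 0, \<lambda>_. 0, \<lambda>_. 0::real)) p"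
      using d[OF assms(5) p] d[OF assms(6) p] d[OF assms(3) p] d[OF assms(4) p]
      by (simp add: lie_def fscale_def Xfield_def vapp_def pd_const pd_mult h1 h2 h3 algebra_simps)
  qed
  show ?thesis
    using g3 g1lem[OF assms(1,3,5,7,11,16)] g1lem[OF assms(1,4,6,8,12,17)] by blast
qed

end
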